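(* Assume (C0), (C1), (C2). Then, as $k\to\infty$ over $\mathbb{N}_{odd}$, $$\|\Phi_k\|_{L^2(0,\infty)}=O(1),\qquad \|\Phi_k'\|_{L^2(0,\infty)}=O(k),\qquad \|\Phi_k'\|_{L^\infty(0,\infty)}=O(k^{3/2}).$$ In particular $|\Phi_k'(0)|=O(k^{3/2})$.
   Context: Let $\omega>0$; $\mathbb{N}_{odd}$ is the set of positive odd integers. (C0): $g\in L^\infty(\mathbb{R})$ even, $g\not\equiv0$, $h=\gamma\delta_0$ with $\gamma\in\mathbb{R}\setminus\{0\}$. For $k\in\mathbb{N}_{odd}$, $L_k=-\frac{d^2}{dx^2}-k^2\omega^2g$ on $L^2(\mathbb{R})$ with domain $H^2(\mathbb{R})$; $\sigma_D(L_k)$ is the spectrum of $L_k$ restricted to $\{\varphi\in H^2(\mathbb{R}):\varphi(0)=0\}$. (C1): for all $k\in\mathbb{N}_{odd}$, $0\notin\sigma_{ess}(L_k)\cup\sigma_D(L_k)$. Under (C0),(C1) fix for each $k\in\mathbb{N}_{odd}$ a function $\Phi_k\in H^2(0,\infty)$ with $L_k\Phi_k=0$ on $(0,\infty)$ and $\Phi_k(0)=1$. (C2): there exist $\rho,M>0$ with $|\Phi_k(x)|\le Me^{-\rho x}$ for $x\ge0$, $k\in\mathbb{N}_{odd}$. *)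

theory Defs
  imports "HOL-Analysis.Analysis"
begin

definition sq_int :: "real set \<Rightarrow> (real \<Rightarrow> complex) \<Rightarrow> bool" where
  "sq_int S f \<longleftrightarrow> set_borel_measurable lborel S f \<and>
     set_integrable lborel S (\<lambda>x. (norm (f x))^2)"

definition l2norm :: "real set \<Rightarrow> (real \<Rightarrow> complex) \<Rightarrow> real" where
  "l2norm S f = sqrt (LINT x:S|lborel. (norm (f x))^2)"

text \<open>Sobolev space H2 on an interval S (here UNIV, {..0} or {0..}):
  u is differentiable on S with derivative u1, u1 is locally absolutely continuous with
  a.e. derivative u2 (u1 y - u1 x = integral of u2 over [x,y]), and u, u1, u2 are in L2(S).\<close>
definition H2 :: "real set \<Rightarrow> (real \<Rightarrow> complex) \<Rightarrow> (real \<Rightarrow> complex) \<Rightarrow> (real \<Rightarrow> complex) \<Rightarrow> bool" where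
  "H2 S u u1 u2 \<longleftrightarrow>
     (\<forall>x\<in>S. (u has_vector_derivative u1 x) (at x within S)) \<and>
     (\<forall>x\<in>S. \<forall>y\<in>S. x \<le> y \<longrightarrow> (u2 has_integral (u1 y - u1 x)) {x..y}) \<and>
     sq_int S u \<and> sq_int S u1 \<and> sq_int S u2"

text \<open>Graph of L_k = -d^2/dx^2 - k^2 omega^2 g on L2(R) with domain H2(R): pairs (u, L_k u).\<close>
definition graph_L :: "(real \<Rightarrow> real) \<Rightarrow> real \<Rightarrow> nat \<Rightarrow> (real \<Rightarrow> complex) \<Rightarrow> (real \<Rightarrow> complex) \<Rightarrow> bool" where
  "graph_L g \<omega> k u w \<longleftrightarrow> (\<exists>u1 u2. H2 UNIV u u1 u2 \<and>
     (\<forall>x. w x = - u2 x - complex_of_real ((real k)^2 * \<omega>^2 * g x) * u x))"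

text \<open>Graph of the Dirichlet realisation of L_k (Dirichlet condition u(0)=0 decoupling the two
  half-lines): u in H2 on each closed half-line, u(0)=0, w = L_k u on each open half-line.\<close>
definition graph_LD :: "(real \<Rightarrow> real) \<Rightarrow> real \<Rightarrow> nat \<Rightarrow> (real \<Rightarrow> complex) \<Rightarrow> (real \<Rightarrow> complex) \<Rightarrow> bool" where
  "graph_LD g \<omega> k u w \<longleftrightarrow> u 0 = 0 \<and>
     (\<exists>a1 a2. H2 {..0} u a1 a2 \<and>
        (\<forall>x<0. w x = - a2 x - complex_of_real ((real k)^2 * \<omega>^2 * g x) * u x)) \<and>
     (\<exists>b1 b2. H2 {0..} u b1 b2 \<and>
        (\<forall>x>0. w x = - b2 x - complex_of_real ((real k)^2 * \<omega>^2 * g x) * u x))"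

definition zero_in_resolvent :: "((real \<Rightarrow> complex) \<Rightarrow> (real \<Rightarrow> complex) \<Rightarrow> bool) \<Rightarrow> bool" where
  "zero_in_resolvent G \<longleftrightarrow>
     (\<forall>f. sq_int UNIV f \<longrightarrow> (\<exists>u w. G u w \<and> (AE x in lborel. w x = f x))) \<and>
     (\<exists>C. \<forall>u w. G u w \<longrightarrow> l2norm UNIV u \<le> C * l2norm UNIV w)"

text \<open>0 lies in the essential spectrum of the (self-adjoint) operator with graph G:
  Weyl criterion, i.e. there is a singular Weyl sequence.\<close>
definition zero_in_ess :: "((real \<Rightarrow> complex) \<Rightarrow> (real \<Rightarrow> complex) \<Rightarrow> bool) \<Rightarrow> bool" where
  "zero_in_ess G \<longleftrightarrow> (\<exists>u w :: nat \<Rightarrow> real \<Rightarrow> complex.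
     (\<forall>n. G (u n) (w n) \<and> l2norm UNIV (u n) = 1) \<and>
     (\<forall>v. sq_int UNIV v \<longrightarrow> (\<lambda>n. LINT x|lborel. u n x * cnj (v x)) \<longlonglongrightarrow> 0) \<and>
     (\<lambda>n. l2norm UNIV (w n)) \<longlonglongrightarrow> 0)"

end

theory Submission
  imports Defs
begin


lemma prod_int:
  fixes a b :: "real \<Rightarrow> complex" and f :: "real \<times> real \<Rightarrow> complex"
  assumes a: "integrable lborel a" and b: "integrable lborel b"
    and f: "f \<in> borel_measurable (lborel \<Otimes>\<^sub>M lborel)"
    and bd: "\<And>p. norm (f p) \<le> norm (a (fst p)) * norm (b (snd p))"
  shows "integrable (lborel \<Otimes>\<^sub>M lborel) f"
proof (rule Bochner_Integration.integrable_bound[OF _ f])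
  have am[measurable]: "a \<in> borel_measurable lborel" using a by auto
  have bm[measurable]: "b \<in> borel_measurable lborel" using b by auto
  show "integrable (lborel \<Otimes>\<^sub>M lborel) (\<lambda>p. norm (a (fst p)) * norm (b (snd p)))"
  proof (rule lborel_pair.Fubini_integrable)
    show "(\<lambda>p. norm (a (fst p)) * norm (b (snd p))) \<in> borel_measurable (lborel \<Otimes>\<^sub>M lborel)"
      by measurable
    show "integrable lborel (\<lambda>x. \<integral>y. norm (norm (a (fst (x, y))) * norm (b (snd (x, y)))) \<partial>lborel)"
      using a by (simp add: integrable_norm)
    show "AE x in lborel. integrable lborel (\<lambda>y. norm (a (fst (x, y))) * norm (b (snd (x, y))))"
      using b by (simp add: integrable_norm)
  qed
  show "AE x in lborel \<Otimes>\<^sub>M lborel. norm (f x) \<le> norm (norm (a (fst x)) * norm (b (snd x)))"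
    using bd by simp
qed



lemma key:
  fixes a b :: "real \<Rightarrow> complex"
  assumes a: "integrable lborel a" and b: "integrable lborel b"
  shows "(\<integral>t. cnj (a t) * (\<integral>s. indicator {..t} s *\<^sub>R b s \<partial>lborel)
            + cnj (\<integral>s. indicator {..t} s *\<^sub>R a s \<partial>lborel) * b t \<partial>lborel)
         = cnj (\<integral>s. a s \<partial>lborel) * (\<integral>t. b t \<partial>lborel)"
proof -
  have am[measurable]: "a \<in> borel_measurable lborel" using a by auto
  have bm[measurable]: "b \<in> borel_measurable lborel" using b by auto
  define ac where "ac = (\<lambda>x. cnj (a x))"
  have acm[measurable]: "ac \<in> borel_measurable lborel" unfolding ac_def
    by (rule borel_measurable_integrable) (use a in simp)
  define G1 where "G1 = (\<lambda>p::real\<times>real. if snd p < fst p then ac (fst p) * b (snd p) else 0)"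
  define G2 where "G2 = (\<lambda>p::real\<times>real. if snd p \<le> fst p then ac (snd p) * b (fst p) else 0)"
  define H where "H = (\<lambda>p::real\<times>real. ac (snd p) * b (fst p))"
  have G1m[measurable]: "G1 \<in> borel_measurable (lborel \<Otimes>\<^sub>M lborel)"
    unfolding G1_def by measurable
  have G2m[measurable]: "G2 \<in> borel_measurable (lborel \<Otimes>\<^sub>M lborel)"
    unfolding G2_def by measurable
  have Hm[measurable]: "H \<in> borel_measurable (lborel \<Otimes>\<^sub>M lborel)"
    unfolding H_def by measurable
  have ca: "integrable lborel (\<lambda>x. cnj (a x))" using a by simp
  have G1i: "integrable (lborel \<Otimes>\<^sub>M lborel) G1"
    by (rule prod_int[OF ca b G1m]) (simp add: G1_def ac_def norm_mult)
  have G2i: "integrable (lborel \<Otimes>\<^sub>M lborel) G2"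
    by (rule prod_int[OF b ca G2m]) (simp add: G2_def ac_def norm_mult)
  have Hi: "integrable (lborel \<Otimes>\<^sub>M lborel) H"
    by (rule prod_int[OF b ca Hm]) (simp add: H_def ac_def norm_mult)
  have G1s: "integrable (lborel \<Otimes>\<^sub>M lborel) (\<lambda>(x,y). G1 (y,x))"
    using lborel_pair.integrable_product_swap[OF G1i] .
  have g1: "(\<lambda>s. G1 (t,s)) = (\<lambda>s. cnj (a t) * (indicator {..<t} s *\<^sub>R b s))" for t
    by (auto simp: G1_def ac_def indicator_def fun_eq_iff)
  have g2: "(\<lambda>s. G2 (t,s)) = (\<lambda>s. cnj (indicator {..t} s *\<^sub>R a s) * b t)" for t
    by (auto simp: G2_def ac_def indicator_def fun_eq_iff)
  have e1: "cnj (a t) * (\<integral>s. indicator {..t} s *\<^sub>R b s \<partial>lborel) = (\<integral>s. G1 (t,s) \<partial>lborel)" for t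
  proof -
    have "(\<integral>s. indicator {..t} s *\<^sub>R b s \<partial>lborel) = (\<integral>s. indicator {..<t} s *\<^sub>R b s \<partial>lborel)"
      by (rule integral_cong_AE) (auto intro!: eventually_mono[OF AE_lborel_singleton[of t]] simp: indicator_def)
    then show ?thesis by (simp only: g1 integral_mult_right_zero)
  qed
  have e2: "cnj (\<integral>s. indicator {..t} s *\<^sub>R a s \<partial>lborel) * b t = (\<integral>s. G2 (t,s) \<partial>lborel)" for t
    by (simp only: g2 integral_mult_left_zero Bochner_Integration.integral_cnj)
  have i1: "integrable lborel (\<lambda>s. G1 (t,s))" for t
    unfolding g1 by (intro integrable_mult_right integrable_mult_indicator b) auto
  have i2: "integrable lborel (\<lambda>s. G2 (t,s))" for t
    unfolding g2 using a by (intro integrable_mult_left) (auto intro!: integrable_mult_indicator)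
  have "(\<integral>t. cnj (a t) * (\<integral>s. indicator {..t} s *\<^sub>R b s \<partial>lborel)
            + cnj (\<integral>s. indicator {..t} s *\<^sub>R a s \<partial>lborel) * b t \<partial>lborel)
      = (\<integral>t. (\<integral>s. G1 (t,s) + G2 (t,s) \<partial>lborel) \<partial>lborel)"
    by (simp only: e1 e2 Bochner_Integration.integral_add[OF i1 i2])
  also have "\<dots> = integral\<^sup>L (lborel \<Otimes>\<^sub>M lborel) (\<lambda>p. G1 p + G2 p)"
    using lborel_pair.integral_fst'[OF Bochner_Integration.integrable_add[OF G1i G2i]] by simp
  also have "\<dots> = integral\<^sup>L (lborel \<Otimes>\<^sub>M lborel) G1 + integral\<^sup>L (lborel \<Otimes>\<^sub>M lborel) G2"
    by (rule Bochner_Integration.integral_add[OF G1i G2i])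
  also have "integral\<^sup>L (lborel \<Otimes>\<^sub>M lborel) G1 = (\<integral>(x,y). G1 (y,x) \<partial>(lborel \<Otimes>\<^sub>M lborel))"
    using lborel_pair.integral_product_swap[OF G1m] by simp
  also have "(\<integral>(x,y). G1 (y,x) \<partial>(lborel \<Otimes>\<^sub>M lborel)) + integral\<^sup>L (lborel \<Otimes>\<^sub>M lborel) G2
      = integral\<^sup>L (lborel \<Otimes>\<^sub>M lborel) (\<lambda>p. (case p of (x,y) \<Rightarrow> G1 (y,x)) + G2 p)"
    by (rule Bochner_Integration.integral_add[OF G1s G2i, symmetric])
  also have "(\<lambda>p. (case p of (x,y) \<Rightarrow> G1 (y,x)) + G2 p) = H"
    by (auto simp: fun_eq_iff G1_def G2_def H_def indicator_def)
  also have "integral\<^sup>L (lborel \<Otimes>\<^sub>M lborel) H = (\<integral>t. (\<integral>s. H (t,s) \<partial>lborel) \<partial>lborel)"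
    using lborel_pair.integral_fst'[OF Hi] by simp
  also have "\<dots> = cnj (\<integral>s. a s \<partial>lborel) * (\<integral>t. b t \<partial>lborel)"
    by (simp add: H_def ac_def)

  finally show ?thesis .
qed



lemma PR:
  fixes u v a b :: "real \<Rightarrow> complex"
  assumes xy: "x \<le> y"
    and a: "set_integrable lborel {x..y} a" and b: "set_integrable lborel {x..y} b"
    and u: "\<forall>t\<in>{x..y}. u t = u x + (LINT s:{x..t}|lborel. a s)"
    and v: "\<forall>t\<in>{x..y}. v t = v x + (LINT s:{x..t}|lborel. b s)"
  shows "set_integrable lborel {x..y} (\<lambda>t. cnj (a t) * v t + cnj (u t) * b t)"
    and "cnj (u y) * v y - cnj (u x) * v x = (LINT t:{x..y}|lborel. cnj (a t) * v t + cnj (u t) * b t)"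
proof -
  define a' where "a' = (\<lambda>s. indicator {x..y} s *\<^sub>R a s)"
  define b' where "b' = (\<lambda>s. indicator {x..y} s *\<^sub>R b s)"
  have ai: "integrable lborel a'" using a unfolding a'_def set_integrable_def .
  have bi: "integrable lborel b'" using b unfolding b'_def set_integrable_def .
  have am[measurable]: "a' \<in> borel_measurable lborel" using ai by auto
  have bm[measurable]: "b' \<in> borel_measurable lborel" using bi by auto
  define A where "A = (\<lambda>t. \<integral>s. indicator {..t} s *\<^sub>R a' s \<partial>lborel)"
  define B where "B = (\<lambda>t. \<integral>s. indicator {..t} s *\<^sub>R b' s \<partial>lborel)"
  have am'[measurable]: "a' \<in> borel_measurable borel" using am by simp
  have bm'[measurable]: "b' \<in> borel_measurable borel" using bm by simp
  have Am[measurable]: "A \<in> borel_measurable lborel"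
  proof -
    have "A = (\<lambda>t. \<integral>s. (if s \<le> t then a' s else 0) \<partial>lborel)"
      unfolding A_def by (auto simp: fun_eq_iff indicator_def intro!: Bochner_Integration.integral_cong)
    also have "\<dots> \<in> borel_measurable lborel" by measurable
    finally show ?thesis .
  qed
  have Bm[measurable]: "B \<in> borel_measurable lborel"
  proof -
    have "B = (\<lambda>t. \<integral>s. (if s \<le> t then b' s else 0) \<partial>lborel)"
      unfolding B_def by (auto simp: fun_eq_iff indicator_def intro!: Bochner_Integration.integral_cong)
    also have "\<dots> \<in> borel_measurable lborel" by measurable
    finally show ?thesis .
  qed
  have Aeq: "(LINT s:{x..t}|lborel. a s) = A t" if "t \<in> {x..y}" for t
    unfolding A_def a'_def set_lebesgue_integral_def
    by (rule Bochner_Integration.integral_cong) (use that in \<open>auto simp: indicator_def\<close>)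
  have Beq: "(LINT s:{x..t}|lborel. b s) = B t" if "t \<in> {x..y}" for t
    unfolding B_def b'_def set_lebesgue_integral_def
    by (rule Bochner_Integration.integral_cong) (use that in \<open>auto simp: indicator_def\<close>)
  have Ay: "A y = (\<integral>s. a' s \<partial>lborel)"
    unfolding A_def a'_def by (rule Bochner_Integration.integral_cong) (auto simp: indicator_def)
  have By: "B y = (\<integral>s. b' s \<partial>lborel)"
    unfolding B_def b'_def by (rule Bochner_Integration.integral_cong) (auto simp: indicator_def)
  have Abd: "norm (A t) \<le> (\<integral>s. norm (a' s) \<partial>lborel)" for t
  proof -
    have "norm (A t) \<le> (\<integral>s. norm (indicator {..t} s *\<^sub>R a' s) \<partial>lborel)"
      unfolding A_def by (rule integral_norm_bound)
    also have "\<dots> \<le> (\<integral>s. norm (a' s) \<partial>lborel)"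
      by (rule integral_mono[OF integrable_norm[OF integrable_mult_indicator[OF _ ai]] integrable_norm[OF ai]])
         (auto simp: indicator_def)
    finally show ?thesis .
  qed
  have Bbd: "norm (B t) \<le> (\<integral>s. norm (b' s) \<partial>lborel)" for t
  proof -
    have "norm (B t) \<le> (\<integral>s. norm (indicator {..t} s *\<^sub>R b' s) \<partial>lborel)"
      unfolding B_def by (rule integral_norm_bound)
    also have "\<dots> \<le> (\<integral>s. norm (b' s) \<partial>lborel)"
      by (rule integral_mono[OF integrable_norm[OF integrable_mult_indicator[OF _ bi]] integrable_norm[OF bi]])
         (auto simp: indicator_def)
    finally show ?thesis .
  qed
  have feq: "(\<lambda>t. indicator {x..y} t *\<^sub>R (cnj (a t) * v t + cnj (u t) * b t))
     = (\<lambda>t. (cnj (a' t) * v x + cnj (u x) * b' t) + (cnj (a' t) * B t + cnj (A t) * b' t))"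
  proof
    fix t show "indicator {x..y} t *\<^sub>R (cnj (a t) * v t + cnj (u t) * b t)
     = (cnj (a' t) * v x + cnj (u x) * b' t) + (cnj (a' t) * B t + cnj (A t) * b' t)"
    proof (cases "t \<in> {x..y}")
      case True
      have "u t = u x + A t" "v t = v x + B t"
        using u[rule_format, OF True] v[rule_format, OF True] Aeq[OF True] Beq[OF True] by simp_all
      then show ?thesis using True by (simp add: a'_def b'_def algebra_simps)
    next
      case False
      then show ?thesis by (simp add: a'_def b'_def)
    qed
  qed
  have ca: "integrable lborel (\<lambda>t. cnj (a' t))" using ai by simp
  have i1: "integrable lborel (\<lambda>t. cnj (a' t) * v x + cnj (u x) * b' t)"
    using ca bi by (intro Bochner_Integration.integrable_add integrable_mult_left integrable_mult_right) auto
  have i2a: "integrable lborel (\<lambda>t. cnj (a' t) * B t)"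
  proof (rule Bochner_Integration.integrable_bound)
    show "integrable lborel (\<lambda>t. norm (a' t) * (\<integral>s. norm (b' s) \<partial>lborel))"
      using ai by (intro integrable_mult_left integrable_norm)
    have "(\<lambda>t. cnj (a' t)) \<in> borel_measurable lborel" using ca by (rule borel_measurable_integrable)
    then show "(\<lambda>t. cnj (a' t) * B t) \<in> borel_measurable lborel" by measurable
    show "AE t in lborel. norm (cnj (a' t) * B t) \<le> norm (norm (a' t) * (\<integral>s. norm (b' s) \<partial>lborel))"
      using Bbd by (auto simp: norm_mult intro!: mult_left_mono order.trans[OF _ abs_ge_self])
  qed
  have i2b: "integrable lborel (\<lambda>t. cnj (A t) * b' t)"
  proof (rule Bochner_Integration.integrable_bound)
    show "integrable lborel (\<lambda>t. (\<integral>s. norm (a' s) \<partial>lborel) * norm (b' t))"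
      using bi by (intro integrable_mult_right integrable_norm)
    have "(\<lambda>t. cnj (A t)) \<in> borel_measurable lborel"
      by (rule borel_measurable_continuous_on[OF _ Am]) (intro continuous_intros)
    then show "(\<lambda>t. cnj (A t) * b' t) \<in> borel_measurable lborel" by measurable
    show "AE t in lborel. norm (cnj (A t) * b' t) \<le> norm ((\<integral>s. norm (a' s) \<partial>lborel) * norm (b' t))"
      using Abd by (auto simp: norm_mult intro!: mult_right_mono order.trans[OF _ abs_ge_self])
  qed
  have i2: "integrable lborel (\<lambda>t. cnj (a' t) * B t + cnj (A t) * b' t)"
    using i2a i2b by (rule Bochner_Integration.integrable_add)
  show "set_integrable lborel {x..y} (\<lambda>t. cnj (a t) * v t + cnj (u t) * b t)"
    unfolding set_integrable_def feq using i1 i2 by (rule Bochner_Integration.integrable_add)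
  have "(LINT t:{x..y}|lborel. cnj (a t) * v t + cnj (u t) * b t)
     = (\<integral>t. cnj (a' t) * v x + cnj (u x) * b' t \<partial>lborel) + (\<integral>t. cnj (a' t) * B t + cnj (A t) * b' t \<partial>lborel)"
    unfolding set_lebesgue_integral_def feq by (rule Bochner_Integration.integral_add[OF i1 i2])
  also have "(\<integral>t. cnj (a' t) * B t + cnj (A t) * b' t \<partial>lborel) = cnj (\<integral>s. a' s \<partial>lborel) * (\<integral>t. b' t \<partial>lborel)"
    unfolding A_def B_def by (rule key[OF ai bi])
  also have "(\<integral>t. cnj (a' t) * v x + cnj (u x) * b' t \<partial>lborel)
      = cnj (\<integral>s. a' s \<partial>lborel) * v x + cnj (u x) * (\<integral>t. b' t \<partial>lborel)"
    using ca bi by (subst Bochner_Integration.integral_add) auto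
  finally have R: "(LINT t:{x..y}|lborel. cnj (a t) * v t + cnj (u t) * b t)
     = cnj (\<integral>s. a' s \<partial>lborel) * v x + cnj (u x) * (\<integral>t. b' t \<partial>lborel) + cnj (\<integral>s. a' s \<partial>lborel) * (\<integral>t. b' t \<partial>lborel)" .
  have yy: "y \<in> {x..y}" using xy by auto
  have uy: "u y = u x + (\<integral>s. a' s \<partial>lborel)" using u[rule_format, OF yy] Aeq[OF yy] Ay by simp
  have vy: "v y = v x + (\<integral>s. b' s \<partial>lborel)" using v[rule_format, OF yy] Beq[OF yy] By by simp
  show "cnj (u y) * v y - cnj (u x) * v x = (LINT t:{x..y}|lborel. cnj (a t) * v t + cnj (u t) * b t)"
    unfolding R uy vy by (simp add: algebra_simps)
qed



lemma le_one_plus_sq: "(r::real) \<ge> 0 \<Longrightarrow> r \<le> 1 + r^2"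
proof -
  assume r: "r \<ge> 0"
  have "0 \<le> (r - 1)^2" by simp
  then show ?thesis using r by (simp add: power2_eq_square algebra_simps)
qed

lemma loc_int:
  fixes f :: "real \<Rightarrow> complex"
  assumes m: "set_borel_measurable lborel {0..} f"
    and i: "set_integrable lborel {0..} (\<lambda>x. (norm (f x))^2)" and x: "0 \<le> x"
  shows "set_integrable lborel {x..y} f"
proof (rule set_integrable_bound[where f = "\<lambda>t. 1 + (norm (f t))^2"])
  have "set_integrable lborel {x..y} (\<lambda>t. 1::real)"
    by (rule borel_integrable_atLeastAtMost') (rule continuous_on_const)
  moreover have "set_integrable lborel {x..y} (\<lambda>t. (norm (f t))^2)"
    by (rule set_integrable_subset[OF i]) (use x in auto)
  ultimately show "set_integrable lborel {x..y} (\<lambda>t. 1 + (norm (f t))^2)"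
    by (rule set_integral_add(1))
  show "set_borel_measurable lborel {x..y} f"
    by (rule set_borel_measurable_subset[OF m]) (use x in auto)
  show "AE t in lborel. t \<in> {x..y} \<longrightarrow> norm (f t) \<le> norm (1 + (norm (f t))^2)"
    using le_one_plus_sq[of "norm (f _)"] by auto
qed

lemma hk_to_lint:
  fixes f :: "real \<Rightarrow> complex"
  assumes "set_integrable lborel S f" "(f has_integral I) S"
  shows "(LINT x:S|lborel. f x) = I"
  using set_borel_integral_eq_integral(2)[OF assms(1)] assms(2) integral_unique by metis

lemma sbm_normprod:
  fixes f g :: "real \<Rightarrow> complex"
  assumes "set_borel_measurable lborel A f" "set_borel_measurable lborel A g"
  shows "set_borel_measurable lborel A (\<lambda>x. norm (f x) * norm (g x))"
proof -
  have [measurable]: "(\<lambda>x. indicator A x *\<^sub>R f x) \<in> borel_measurable lborel"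
     "(\<lambda>x. indicator A x *\<^sub>R g x) \<in> borel_measurable lborel"
    using assms unfolding set_borel_measurable_def by auto
  have "(\<lambda>x. indicator A x *\<^sub>R (norm (f x) * norm (g x))) =
        (\<lambda>x. norm (indicator A x *\<^sub>R f x) * norm (indicator A x *\<^sub>R g x))"
    by (auto simp: fun_eq_iff indicator_def)
  also have "\<dots> \<in> borel_measurable lborel" by measurable
  finally show ?thesis unfolding set_borel_measurable_def .
qed

lemma sbm_normsq:
  fixes f :: "real \<Rightarrow> complex"
  assumes "set_borel_measurable lborel A f"
  shows "set_borel_measurable lborel A (\<lambda>x. (norm (f x))^2)"
  using sbm_normprod[OF assms assms] by (simp add: power2_eq_square)

lemma cross_int:
  fixes f g :: "real \<Rightarrow> complex"
  assumes mf: "set_borel_measurable lborel A f" and mg: "set_borel_measurable lborel A g"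
    and f: "set_integrable lborel A (\<lambda>x. (norm (f x))^2)"
    and g: "set_integrable lborel A (\<lambda>x. (norm (g x))^2)"
    and K: "K > 0"
  shows "set_integrable lborel A (\<lambda>x. norm (f x) * norm (g x))"
    and "2 * (LINT x:A|lborel. norm (f x) * norm (g x))
          \<le> K * (LINT x:A|lborel. (norm (f x))^2) + (LINT x:A|lborel. (norm (g x))^2) / K"
proof -
  have pw: "2 * (norm (f x) * norm (g x)) \<le> K * (norm (f x))^2 + (norm (g x))^2 / K" for x
  proof -
    have "0 \<le> (K * norm (f x) - norm (g x))^2 / K" using K by simp
    then show ?thesis using K by (simp add: power2_eq_square field_simps)
  qed
  have pw2: "norm (f x) * norm (g x) \<le> K * (norm (f x))^2 + (norm (g x))^2 / K" for x
    using pw[of x] mult_nonneg_nonneg[OF norm_ge_zero norm_ge_zero, of "f x" "g x"] by linarith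
  have bi: "set_integrable lborel A (\<lambda>x. K * (norm (f x))^2 + (norm (g x))^2 / K)"
    using f g by (intro set_integral_add(1)) auto
  show i: "set_integrable lborel A (\<lambda>x. norm (f x) * norm (g x))"
  proof (rule set_integrable_bound[OF bi sbm_normprod[OF mf mg]])
    show "AE x in lborel. x \<in> A \<longrightarrow> norm (norm (f x) * norm (g x)) \<le> norm (K * (norm (f x))^2 + (norm (g x))^2 / K)"
      using pw2 K by (auto intro!: order.trans[OF _ abs_ge_self] always_eventually simp: abs_mult)
  qed
  have "(LINT x:A|lborel. 2 * (norm (f x) * norm (g x))) \<le> (LINT x:A|lborel. K * (norm (f x))^2 + (norm (g x))^2 / K)"
    by (rule set_integral_mono[OF _ bi]) (use i pw in \<open>auto simp: set_integrable_mult_right\<close>)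
  also have "\<dots> = K * (LINT x:A|lborel. (norm (f x))^2) + (LINT x:A|lborel. (norm (g x))^2) / K"
    using f g by (simp add: set_integral_add(2))
  finally show "2 * (LINT x:A|lborel. norm (f x) * norm (g x))
          \<le> K * (LINT x:A|lborel. (norm (f x))^2) + (LINT x:A|lborel. (norm (g x))^2) / K"
    by simp
qed



lemma set_integral_mono_set_nonneg:
  fixes h :: "real \<Rightarrow> real"
  assumes i: "set_integrable lborel B h" and A: "A \<in> sets lborel" "A \<subseteq> B"
    and nn: "\<And>x. x \<in> B \<Longrightarrow> 0 \<le> h x"
  shows "(LINT x:A|lborel. h x) \<le> (LINT x:B|lborel. h x)"
proof -
  have iA: "set_integrable lborel A h" by (rule set_integrable_subset[OF i A])
  show ?thesis
    unfolding set_lebesgue_integral_def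
    by (rule integral_mono[OF iA[unfolded set_integrable_def] i[unfolded set_integrable_def]])
       (use A nn in \<open>auto simp: indicator_def\<close>)
qed

lemma seq_zero:
  fixes f :: "real \<Rightarrow> complex"
  assumes m: "set_borel_measurable lborel {0..} f"
    and i: "set_integrable lborel {0..} (\<lambda>x. (norm (f x))^2)"
  shows "\<exists>T::nat\<Rightarrow>real. filterlim T at_top sequentially \<and> (\<lambda>n. f (T n)) \<longlonglongrightarrow> 0 \<and> (\<forall>n. T n \<ge> real n)"
proof -
  define I where "I = (LINT x:{0..}|lborel. (norm (f x))^2)"
  have ex: "\<exists>t \<ge> real n. norm (f t) \<le> 1 / (real n + 1)" for n
  proof (rule ccontr)
    assume "\<not> ?thesis"
    then have big: "\<And>t. t \<ge> real n \<Longrightarrow> norm (f t) > 1 / (real n + 1)" by force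
    define e where "e = (1 / (real n + 1))^2"
    have e: "e > 0" unfolding e_def by simp
    have bound: "e * L \<le> I" if L: "L \<ge> 0" for L
    proof -
      have "e * L = (LINT x:{real n..real n + L}|lborel. e)"
        using L by (subst set_integral_const) (auto simp: mult.commute)
      also have "\<dots> \<le> (LINT x:{real n..real n + L}|lborel. (norm (f x))^2)"
      proof (rule set_integral_mono)
        show "set_integrable lborel {real n..real n + L} (\<lambda>x. e)"
          by (rule borel_integrable_atLeastAtMost') (rule continuous_on_const)
        show "set_integrable lborel {real n..real n + L} (\<lambda>x. (norm (f x))^2)"
          by (rule set_integrable_subset[OF i]) auto
        fix x assume "x \<in> {real n..real n + L}"
        then have "norm (f x) > 1 / (real n + 1)" using big by auto
        then show "e \<le> (norm (f x))^2" unfolding e_def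
          by (intro power_mono) auto
      qed
      also have "\<dots> \<le> I" unfolding I_def
        by (rule set_integral_mono_set_nonneg[OF i]) auto
      finally show ?thesis .
    qed
    have "e * ((\<bar>I\<bar> + 1) / e) \<le> I" by (rule bound) (use e in auto)
    then show False using e by simp
  qed
  then obtain T where T: "\<And>n. T n \<ge> real n \<and> norm (f (T n)) \<le> 1 / (real n + 1)"
    by metis
  have "filterlim T at_top sequentially"
    by (rule filterlim_at_top_mono[OF filterlim_real_sequentially]) (use T in auto)
  moreover have "(\<lambda>n. f (T n)) \<longlonglongrightarrow> 0"
  proof (rule tendsto_norm_zero_cancel, rule tendsto_sandwich[of "\<lambda>_. 0" _ _ "\<lambda>n. 1 / (real n + 1)"])
    show "\<forall>\<^sub>F n in sequentially. 0 \<le> norm (f (T n))" by simp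
    show "\<forall>\<^sub>F n in sequentially. norm (f (T n)) \<le> 1 / (real n + 1)" using T by simp
    show "(\<lambda>_. 0) \<longlonglongrightarrow> (0::real)" by simp
    show "(\<lambda>n. 1 / (real n + 1)) \<longlonglongrightarrow> 0" using LIMSEQ_inverse_real_of_nat by (simp add: inverse_eq_divide add.commute)
  qed
  ultimately show ?thesis using T by blast
qed



lemma sint_cor:
  assumes "set_integrable lborel A (f :: real \<Rightarrow> real)"
  shows "set_integrable lborel A (\<lambda>x. complex_of_real (f x))"
proof -
  have "(\<lambda>x. indicator A x *\<^sub>R complex_of_real (f x)) = (\<lambda>x. complex_of_real (indicator A x *\<^sub>R f x))"
    by (auto simp: fun_eq_iff indicator_def)
  then show ?thesis using assms unfolding set_integrable_def
    by (simp only: complex_of_real_integrable_eq)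
qed

lemma half_le: "2 * (x::real) \<le> r \<Longrightarrow> x \<le> r / 2" by linarith
lemma lin2: "(a::real) \<le> 0^2 + b \<Longrightarrow> b \<le> c \<Longrightarrow> a \<le> c" by simp

lemma cnj_self: "cnj z * z = complex_of_real ((norm z)^2)"
  by (metis complex_norm_square mult.commute)

lemma estimates:
  fixes P D W :: "real \<Rightarrow> complex" and K K2 Mb :: real
  assumes H: "H2 {0..} P D W" and K: "K > 0" and K2: "K2 > 0"
    and Pb: "\<forall>x\<ge>0. norm (P x) \<le> Mb" and P0: "P 0 = 1"
  shows "(LINT x:{0..}|lborel. (norm (D x))^2) \<le> norm (D 0) +
           (K * (LINT x:{0..}|lborel. (norm (P x))^2) + (LINT x:{0..}|lborel. (norm (W x))^2) / K) / 2"
    and "\<forall>x\<ge>0. (norm (D x))^2 \<le> K2 * (LINT x:{0..}|lborel. (norm (D x))^2) + (LINT x:{0..}|lborel. (norm (W x))^2) / K2"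
proof -
  have der: "\<And>x. x \<ge> 0 \<Longrightarrow> (P has_vector_derivative D x) (at x within {0..})"
    and hint: "\<And>x y. 0 \<le> x \<Longrightarrow> x \<le> y \<Longrightarrow> (W has_integral (D y - D x)) {x..y}"
    and mP: "set_borel_measurable lborel {0..} P" and iP: "set_integrable lborel {0..} (\<lambda>x. (norm (P x))^2)"
    and mD: "set_borel_measurable lborel {0..} D" and iD: "set_integrable lborel {0..} (\<lambda>x. (norm (D x))^2)"
    and mW: "set_borel_measurable lborel {0..} W" and iW: "set_integrable lborel {0..} (\<lambda>x. (norm (W x))^2)"
    using H unfolding H2_def sq_int_def by auto
  define IP where "IP = (LINT x:{0..}|lborel. (norm (P x))^2)"
  define ID where "ID = (LINT x:{0..}|lborel. (norm (D x))^2)"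
  define IW where "IW = (LINT x:{0..}|lborel. (norm (W x))^2)"
  define J1 where "J1 = (LINT x:{0..}|lborel. norm (P x) * norm (W x))"
  define J2 where "J2 = (LINT x:{0..}|lborel. norm (D x) * norm (W x))"
  note c1 = cross_int[OF mP mW iP iW K, folded IP_def IW_def J1_def]
  note c2 = cross_int[OF mD mW iD iW K2, folded ID_def IW_def J2_def]
  have lD: "set_integrable lborel {x..y} D" if "0 \<le> x" for x y using loc_int[OF mD iD that] .
  have lW: "set_integrable lborel {x..y} W" if "0 \<le> x" for x y using loc_int[OF mW iW that] .
  have Dform: "\<forall>t\<in>{x..y}. D t = D x + (LINT s:{x..t}|lborel. W s)" if "0 \<le> x" for x y
  proof
    fix t assume t: "t \<in> {x..y}"
    have "(LINT s:{x..t}|lborel. W s) = D t - D x"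
      by (rule hk_to_lint[OF lW[OF that] hint]) (use that t in auto)
    then show "D t = D x + (LINT s:{x..t}|lborel. W s)" by simp
  qed
  have Pform: "\<forall>t\<in>{x..y}. P t = P x + (LINT s:{x..t}|lborel. D s)" if "0 \<le> x" for x y
  proof
    fix t assume t: "t \<in> {x..y}"
    have "(D has_integral (P t - P x)) {x..t}"
    proof (rule fundamental_theorem_of_calculus)
      show "x \<le> t" using t by auto
      fix s assume s: "s \<in> {x..t}"
      show "(P has_vector_derivative D s) (at s within {x..t})"
        by (rule has_vector_derivative_within_subset[OF der]) (use s that in auto)
    qed
    then have "(LINT s:{x..t}|lborel. D s) = P t - P x"
      by (rule hk_to_lint[OF lD[OF that]])
    then show "P t = P x + (LINT s:{x..t}|lborel. D s)" by simp
  qed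
  obtain T where Tlim: "filterlim T at_top sequentially" and DT: "(\<lambda>n. D (T n)) \<longlonglongrightarrow> 0"
    and Tge: "\<forall>n. T n \<ge> real n"
    using seq_zero[OF mD iD] by blast
  have T0: "T n \<ge> 0" for n using Tge[rule_format, of n] by linarith
  have boundC: "(LINT t:{0..T n}|lborel. (norm (D t))^2) \<le> Mb * norm (D (T n)) + norm (D 0) + J1" for n
  proof -
    let ?T = "T n"
    note pr = PR[OF T0[of n] lD[of 0] lW[of 0] Pform[of 0] Dform[of 0], simplified]
    have iDD: "set_integrable lborel {0..?T} (\<lambda>t. cnj (D t) * D t)"
      unfolding cnj_self by (rule sint_cor, rule set_integrable_subset[OF iD]) auto
    have iPW: "set_integrable lborel {0..?T} (\<lambda>t. cnj (P t) * W t)"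
      using set_integral_diff(1)[OF pr(1) iDD] by simp
    have "cnj (P ?T) * D ?T - D 0 = (LINT t:{0..?T}|lborel. cnj (D t) * D t) + (LINT t:{0..?T}|lborel. cnj (P t) * W t)"
      using pr(2) P0 set_integral_add(2)[OF iDD iPW] by simp
    also have "(LINT t:{0..?T}|lborel. cnj (D t) * D t) = complex_of_real (LINT t:{0..?T}|lborel. (norm (D t))^2)"
      unfolding cnj_self by (rule set_integral_complex_of_real)
    finally have eq: "complex_of_real (LINT t:{0..?T}|lborel. (norm (D t))^2)
       = cnj (P ?T) * D ?T - D 0 - (LINT t:{0..?T}|lborel. cnj (P t) * W t)" by simp
    have "norm (LINT t:{0..?T}|lborel. cnj (P t) * W t) \<le> (LINT t:{0..?T}|lborel. norm (cnj (P t) * W t))"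
      by (rule set_integral_norm_bound[OF iPW])
    also have "\<dots> = (LINT t:{0..?T}|lborel. norm (P t) * norm (W t))"
      by (simp add: norm_mult)
    also have "\<dots> \<le> J1" unfolding J1_def
      by (rule set_integral_mono_set_nonneg[OF c1(1)]) auto
    finally have nPW: "norm (LINT t:{0..?T}|lborel. cnj (P t) * W t) \<le> J1" .
    have "(LINT t:{0..?T}|lborel. (norm (D t))^2) = norm (complex_of_real (LINT t:{0..?T}|lborel. (norm (D t))^2))"
    proof -
      have "0 \<le> (LINT t:{0..?T}|lborel. (norm (D t))^2)"
        unfolding set_lebesgue_integral_def by (rule integral_nonneg_AE) (auto simp: indicator_def)
      then show ?thesis by simp
    qed
    also have "\<dots> \<le> norm (cnj (P ?T) * D ?T) + norm (D 0) + norm (LINT t:{0..?T}|lborel. cnj (P t) * W t)"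
      unfolding eq by (rule order.trans[OF norm_triangle_ineq4], rule add_right_mono, rule norm_triangle_ineq4)
    also have "norm (cnj (P ?T) * D ?T) \<le> Mb * norm (D ?T)"
      unfolding norm_mult complex_mod_cnj using Pb T0[of n] by (intro mult_right_mono) auto
    finally show ?thesis using nPW by linarith
  qed
  have lim1: "(\<lambda>n. LINT t:{0..T n}|lborel. (norm (D t))^2) \<longlonglongrightarrow> ID"
    unfolding ID_def
    by (rule filterlim_compose[OF tendsto_set_lebesgue_integral_at_top Tlim]) (use iD in auto)
  have lim2: "(\<lambda>n. Mb * norm (D (T n)) + norm (D 0) + J1) \<longlonglongrightarrow> Mb * 0 + norm (D 0) + J1"
    by (intro tendsto_intros tendsto_norm_zero DT)
  have "ID \<le> Mb * 0 + norm (D 0) + J1"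
    by (rule LIMSEQ_le[OF lim1 lim2]) (use boundC in auto)
  moreover have "J1 \<le> (K * IP + IW / K) / 2" by (rule half_le[OF c1(2)])
  ultimately have "ID \<le> norm (D 0) + (K * IP + IW / K) / 2" by linarith
  then show "(LINT x:{0..}|lborel. (norm (D x))^2) \<le> norm (D 0) +
           (K * (LINT x:{0..}|lborel. (norm (P x))^2) + (LINT x:{0..}|lborel. (norm (W x))^2) / K) / 2"
    unfolding ID_def IP_def IW_def .
  have boundD: "(norm (D x))^2 \<le> (norm (D (T n)))^2 + 2 * J2" if x: "0 \<le> x" "x \<le> T n" for x n
  proof -
    let ?T = "T n"
    note pr = PR[OF x(2) lW[OF x(1)] lW[OF x(1)] Dform[OF x(1)] Dform[OF x(1)]]
    have eq: "complex_of_real ((norm (D ?T))^2) - complex_of_real ((norm (D x))^2)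
       = (LINT t:{x..?T}|lborel. cnj (W t) * D t + cnj (D t) * W t)"
      using pr(2) unfolding cnj_self .
    have "norm (LINT t:{x..?T}|lborel. cnj (W t) * D t + cnj (D t) * W t)
        \<le> (LINT t:{x..?T}|lborel. norm (cnj (W t) * D t + cnj (D t) * W t))"
      by (rule set_integral_norm_bound[OF pr(1)])
    also have "\<dots> \<le> (LINT t:{x..?T}|lborel. 2 * (norm (D t) * norm (W t)))"
    proof (rule set_integral_mono)
      show "set_integrable lborel {x..?T} (\<lambda>t. norm (cnj (W t) * D t + cnj (D t) * W t))"
        by (rule set_integrable_norm[OF pr(1)])
      show "set_integrable lborel {x..?T} (\<lambda>t. 2 * (norm (D t) * norm (W t)))"
        by (rule set_integrable_mult_right, rule set_integrable_subset[OF c2(1)]) (use x in auto)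
      fix t
      have "norm (cnj (W t) * D t + cnj (D t) * W t) \<le> norm (cnj (W t) * D t) + norm (cnj (D t) * W t)"
        by (rule norm_triangle_ineq)
      then show "norm (cnj (W t) * D t + cnj (D t) * W t) \<le> 2 * (norm (D t) * norm (W t))"
        by (simp add: norm_mult)
    qed
    also have "\<dots> = 2 * (LINT t:{x..?T}|lborel. norm (D t) * norm (W t))"
      by simp
    also have "(LINT t:{x..?T}|lborel. norm (D t) * norm (W t)) \<le> J2" unfolding J2_def
      by (rule set_integral_mono_set_nonneg[OF c2(1)]) (use x in auto)
    finally have nR: "norm (LINT t:{x..?T}|lborel. cnj (W t) * D t + cnj (D t) * W t) \<le> 2 * J2" by simp
    have "(norm (D x))^2 = (norm (D ?T))^2 - Re (LINT t:{x..?T}|lborel. cnj (W t) * D t + cnj (D t) * W t)"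
      unfolding eq[symmetric] by simp
    also have "\<dots> \<le> (norm (D ?T))^2 + norm (LINT t:{x..?T}|lborel. cnj (W t) * D t + cnj (D t) * W t)"
      using abs_Re_le_cmod[of "LINT t:{x..?T}|lborel. cnj (W t) * D t + cnj (D t) * W t"] by linarith
    finally show ?thesis using nR by linarith
  qed
  show "\<forall>x\<ge>0. (norm (D x))^2 \<le> K2 * (LINT x:{0..}|lborel. (norm (D x))^2) + (LINT x:{0..}|lborel. (norm (W x))^2) / K2"
  proof (intro allI impI)
    fix x :: real assume x: "0 \<le> x"
    have lim3: "(\<lambda>n. (norm (D (T n)))^2 + 2 * J2) \<longlonglongrightarrow> 0^2 + 2 * J2"
      by (intro tendsto_intros tendsto_norm_zero DT)
    have ev: "eventually (\<lambda>n. (norm (D x))^2 \<le> (norm (D (T n)))^2 + 2 * J2) sequentially"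
    proof -
      obtain N :: nat where xN: "x \<le> real N" using real_arch_simple by blast
      show ?thesis
      proof (intro eventually_sequentiallyI[of N] boundD[OF x])
        fix n assume "N \<le> n"
        then have "real N \<le> real n" by simp
        then show "x \<le> T n" using xN Tge[rule_format, of n] by linarith
      qed
    qed
    have "(norm (D x))^2 \<le> 0^2 + 2 * J2"
      by (rule tendsto_lowerbound[OF lim3 ev]) simp
    then have "(norm (D x))^2 \<le> 2 * J2" by simp
    then have "(norm (D x))^2 \<le> K2 * ID + IW / K2" using c2(2) by (rule order.trans)
    then show "(norm (D x))^2 \<le> K2 * (LINT x:{0..}|lborel. (norm (D x))^2) + (LINT x:{0..}|lborel. (norm (W x))^2) / K2"
      unfolding ID_def IW_def .
  qed
qed



lemma arith_final:
  fixes K IP IW ID d E Kc :: real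
  assumes K: "K \<ge> 1" and IP0: "0 \<le> IP" and IPE: "IP \<le> E" and Kc: "0 \<le> Kc"
    and IW: "IW \<le> (K^2 * Kc)^2 * IP" and ID0: "0 \<le> ID"
    and IDb: "ID \<le> d + (K^2 * IP + IW / K^2) / 2" and d0: "0 \<le> d"
    and db: "d^2 \<le> K * ID + IW / K"
  shows "ID \<le> K^2 * (2 * Kc^2 * E + 1 + E)"
    and "d^2 \<le> K^3 * (2 * Kc^2 * E + 1 + E + Kc^2 * E)"
proof -
  have Kp: "K > 0" using K by simp
  have E0: "0 \<le> E" using IP0 IPE by simp
  have IWE: "IW \<le> K^4 * (Kc^2 * E)"
  proof -
    have "IW \<le> (K^4 * Kc^2) * IP" using IW by (simp add: power_mult_distrib power_mult[symmetric])
    also have "\<dots> \<le> (K^4 * Kc^2) * E" by (rule mult_left_mono[OF IPE]) simp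
    finally show ?thesis by (simp add: mult_ac)
  qed
  have s1: "IW / K^2 \<le> K^2 * (Kc^2 * E)"
    using IWE Kp by (simp add: divide_le_eq power_numeral_reduce mult_ac)
  have s2: "K^2 * IP \<le> K^2 * E" by (rule mult_left_mono[OF IPE]) simp
  have s3: "IW / K \<le> K^3 * (Kc^2 * E)"
    using IWE Kp by (simp add: divide_le_eq power_numeral_reduce mult_ac)
  have s4: "2 * d * K^2 \<le> d^2 + K^4"
  proof -
    have "0 \<le> (d - K^2)^2" by simp
    then show ?thesis by (simp add: power2_eq_square power_numeral_reduce algebra_simps)
  qed
  have s5: "K * ID \<le> K^2 * ID" using K ID0 by (intro mult_right_mono) (auto simp: power2_eq_square)
  have KK: "K \<le> K^2" using K by (simp add: power2_eq_square)
  have "(K^2 * IP + IW / K^2) / 2 \<le> (K^2 * E + K^2 * (Kc^2 * E)) / 2"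
    using s1 s2 by (intro divide_right_mono add_mono) auto
  also have "\<dots> = K^2 * (E + Kc^2 * E) / 2" by (simp add: algebra_simps)
  finally have ID2: "ID \<le> d + K^2 * (E + Kc^2 * E) / 2" using IDb by linarith
  have "2 * K^2 * ID \<le> 2 * K^2 * d + K^4 * (E + Kc^2 * E)"
  proof -
    have "2 * K^2 * ID \<le> 2 * K^2 * (d + K^2 * (E + Kc^2 * E) / 2)"
      by (rule mult_left_mono[OF ID2]) simp
    also have "2 * K^2 * (d + K^2 * (E + Kc^2 * E) / 2) = 2 * K^2 * d + K^4 * (E + Kc^2 * E)"
      by (simp add: field_simps eval_nat_numeral)
    finally show ?thesis .
  qed
  also have "2 * K^2 * d \<le> K * ID + K^3 * (Kc^2 * E) + K^4"
    using s4 db s3 by (simp add: mult_ac)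
  finally have "2 * K^2 * ID \<le> K * ID + K^3 * (Kc^2 * E) + K^4 + K^4 * (E + Kc^2 * E)" by simp
  moreover have "K^3 * (Kc^2 * E) \<le> K^4 * (Kc^2 * E)"
    using K E0 by (intro mult_right_mono) (auto simp: power_increasing)
  ultimately have "K^2 * ID \<le> K^4 * (2 * Kc^2 * E + 1 + E)"
    using s5 by (simp add: algebra_simps)
  moreover have "K^4 * (2 * Kc^2 * E + 1 + E) = K^2 * (K^2 * (2 * Kc^2 * E + 1 + E))"
    by (simp add: eval_nat_numeral mult_ac)
  ultimately have "K^2 * ID \<le> K^2 * (K^2 * (2 * Kc^2 * E + 1 + E))" by (rule ord_le_eq_trans)
  then show IDf: "ID \<le> K^2 * (2 * Kc^2 * E + 1 + E)"
    using mult_le_cancel_left_pos[of "K^2" ID "K^2 * (2 * Kc^2 * E + 1 + E)"] Kp by simp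
  have "K * ID \<le> K * (K^2 * (2 * Kc^2 * E + 1 + E))"
    by (rule mult_left_mono[OF IDf]) (use Kp in simp)
  moreover have "K * (K^2 * (2 * Kc^2 * E + 1 + E)) + K^3 * (Kc^2 * E) = K^3 * (2 * Kc^2 * E + 1 + E + Kc^2 * E)"
    by (simp add: eval_nat_numeral algebra_simps)
  ultimately show "d^2 \<le> K^3 * (2 * Kc^2 * E + 1 + E + Kc^2 * E)"
    using db s3 by linarith
qed

lemma arith_final2:
  fixes K IP IW ID d E Kc :: real
  assumes K: "K \<ge> 1" and IP0: "0 \<le> IP" and IPE: "IP \<le> E" and Kc: "0 \<le> Kc"
    and IW: "IW \<le> (K^2 * Kc)^2 * IP"
    and IDf: "ID \<le> K^2 * (2 * Kc^2 * E + 1 + E)"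
    and db: "d^2 \<le> K * ID + IW / K"
  shows "d^2 \<le> K^3 * (2 * Kc^2 * E + 1 + E + Kc^2 * E)"
proof -
  have Kp: "K > 0" using K by simp
  have IWE: "IW \<le> K^4 * (Kc^2 * E)"
  proof -
    have "IW \<le> (K^4 * Kc^2) * IP" using IW by (simp add: power_mult_distrib power_mult[symmetric])
    also have "\<dots> \<le> (K^4 * Kc^2) * E" by (rule mult_left_mono[OF IPE]) simp
    finally show ?thesis by (simp add: mult_ac)
  qed
  have s3: "IW / K \<le> K^3 * (Kc^2 * E)"
    using IWE Kp by (simp add: divide_le_eq power_numeral_reduce mult_ac)
  have "K * ID \<le> K * (K^2 * (2 * Kc^2 * E + 1 + E))"
    by (rule mult_left_mono[OF IDf]) (use Kp in simp)
  moreover have "K * (K^2 * (2 * Kc^2 * E + 1 + E)) + K^3 * (Kc^2 * E) = K^3 * (2 * Kc^2 * E + 1 + E + Kc^2 * E)"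
    by (simp add: eval_nat_numeral algebra_simps)
  ultimately show "d^2 \<le> K^3 * (2 * Kc^2 * E + 1 + E + Kc^2 * E)"
    using db s3 by linarith
qed

lemma kp: "(K::real) > 0 \<Longrightarrow> (K powr (3/2))^2 = K^3"
proof -
  assume K: "K > 0"
  have "(K powr (3/2))^2 = K powr (3/2) * K powr (3/2)" by (simp add: power2_eq_square)
  also have "\<dots> = K powr 3" by (simp add: powr_add[symmetric])
  also have "\<dots> = K^3" using K by simp
  finally show ?thesis .
qed

lemma exp_int:
  assumes rho: "(\<rho>::real) > 0"
  shows "set_integrable lborel {0..} (\<lambda>x::real. (M * exp (-\<rho>*x))^2)"
proof -
  have eq: "(\<lambda>x::real. (M * exp (-\<rho>*x))^2) = (\<lambda>x. of_real (M^2) * exp (-(2*\<rho>)*x))"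
    by (auto simp: fun_eq_iff power_mult_distrib power2_eq_square exp_add[symmetric])
  have hk: "(\<lambda>x::real. of_real (M^2) * exp (-(2*\<rho>)*x)) integrable_on {0..}"
    by (rule integrable_on_cmult_left[OF integrable_on_exp_minus_to_infinity]) (use rho in simp)
  have "set_integrable lebesgue {0..} (\<lambda>x::real. of_real (M^2) * exp (-(2*\<rho>)*x))"
    by (rule nonnegative_absolutely_integrable_1[OF hk]) simp
  then have "integrable lebesgue (\<lambda>x::real. indicator {0..} x *\<^sub>R (of_real (M^2) * exp (-(2*\<rho>)*x)))"
    unfolding set_integrable_def .
  moreover have "(\<lambda>x::real. indicator {0..} x *\<^sub>R (of_real (M^2) * exp (-(2*\<rho>)*x))) \<in> borel_measurable lborel"
    by measurable
  ultimately have "integrable lborel (\<lambda>x::real. indicator {0..} x *\<^sub>R (of_real (M^2) * exp (-(2*\<rho>)*x)))"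
    using integrable_completion by blast
  then show ?thesis unfolding eq set_integrable_def .
qed



lemma neg_lem: "- a - b = (0::complex) \<Longrightarrow> a = - b"
proof -
  assume "- a - b = 0"
  then have "- a = b" by (simp add: diff_eq_eq)
  then show ?thesis by auto
qed

theorem lemma2p3:
  fixes g :: "real \<Rightarrow> real" and \<omega> \<gamma> :: real
    and \<Phi> d\<Phi> dd\<Phi> :: "nat \<Rightarrow> real \<Rightarrow> complex"
  assumes omega_pos: "\<omega> > 0"
    and C0_meas: "g \<in> borel_measurable lborel"
    and C0_bdd: "\<exists>B. AE x in lborel. \<bar>g x\<bar> \<le> B"
    and C0_even: "AE x in lborel. g (- x) = g x"
    and C0_nonzero: "\<not> (AE x in lborel. g x = 0)"
    and C0_gamma: "\<gamma> \<noteq> 0"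
    and C1: "\<forall>k. odd k \<longrightarrow>
              \<not> zero_in_ess (graph_L g \<omega> k) \<and> zero_in_resolvent (graph_LD g \<omega> k)"
    and Phi_H2: "\<forall>k. odd k \<longrightarrow> H2 {0..} (\<Phi> k) (d\<Phi> k) (dd\<Phi> k)"
    and Phi_eq: "\<forall>k. odd k \<longrightarrow> (AE x in lborel. x > 0 \<longrightarrow>
              - dd\<Phi> k x - complex_of_real ((real k)^2 * \<omega>^2 * g x) * \<Phi> k x = 0)"
    and Phi_0: "\<forall>k. odd k \<longrightarrow> \<Phi> k 0 = 1"
    and C2: "\<exists>\<rho> M. \<rho> > 0 \<and> M > 0 \<and>
              (\<forall>k. odd k \<longrightarrow> (\<forall>x\<ge>0. norm (\<Phi> k x) \<le> M * exp (- \<rho> * x)))"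
  shows "\<exists>C N. \<forall>k. odd k \<and> k \<ge> N \<longrightarrow>
           l2norm {0..} (\<Phi> k) \<le> C \<and>
           l2norm {0..} (d\<Phi> k) \<le> C * real k \<and>
           (\<forall>x\<ge>0. norm (d\<Phi> k x) \<le> C * real k powr (3/2)) \<and>
           norm (d\<Phi> k 0) \<le> C * real k powr (3/2)"
proof -
  obtain \<rho> M where rho: "\<rho> > 0" and Mp: "M > 0"
    and Pb: "\<forall>k. odd k \<longrightarrow> (\<forall>x\<ge>0. norm (\<Phi> k x) \<le> M * exp (- \<rho> * x))"
    using C2 by blast
  obtain B0 where gB0: "AE x in lborel. \<bar>g x\<bar> \<le> B0" using C0_bdd by blast
  define B where "B = \<bar>B0\<bar>"
  have gB: "AE x in lborel. \<bar>g x\<bar> \<le> B"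
    using gB0 by (rule eventually_mono) (auto simp: B_def)
  have B0': "0 \<le> B" by (simp add: B_def)
  define Kc where "Kc = \<omega>^2 * B"
  have Kc0: "0 \<le> Kc" unfolding Kc_def using B0' by simp
  define F where "F = (\<lambda>x::real. (M * exp (-\<rho>*x))^2)"
  have Fint: "set_integrable lborel {0..} F" unfolding F_def by (rule exp_int[OF rho])
  define E where "E = (LINT x:{0..}|lborel. F x)"
  define Ybd where "Ybd = 2 * Kc^2 * E + 1 + E"
  define Q where "Q = 2 * Kc^2 * E + 1 + E + Kc^2 * E"
  define C where "C = sqrt E + sqrt Ybd + sqrt Q"
  have E0: "0 \<le> E" unfolding E_def F_def set_lebesgue_integral_def
    by (rule integral_nonneg_AE) (auto simp: indicator_def)
  have Ybd0: "0 \<le> Ybd" unfolding Ybd_def using E0 by simp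
  have Q0': "0 \<le> Q" unfolding Q_def using E0 by simp
  have C0: "0 \<le> C" unfolding C_def using E0 Ybd0 Q0' by simp
  have CE: "sqrt E \<le> C" "sqrt Ybd \<le> C" "sqrt Q \<le> C" unfolding C_def using E0 Ybd0 Q0' by simp_all
  show ?thesis
  proof (intro exI[of _ C] exI[of _ 1] allI impI)
    fix k :: nat assume k: "odd k \<and> 1 \<le> k"
    have ko: "odd k" using k by simp
    define K where "K = real k"
    have K1: "K \<ge> 1" using k by (simp add: K_def)
    have Kp: "K > 0" using K1 by simp
    note H = Phi_H2[rule_format, OF ko]
    have mP: "set_borel_measurable lborel {0..} (\<Phi> k)" and iP: "set_integrable lborel {0..} (\<lambda>x. (norm (\<Phi> k x))^2)"
      and iW: "set_integrable lborel {0..} (\<lambda>x. (norm (dd\<Phi> k x))^2)"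
      using H unfolding H2_def sq_int_def by auto
    define IP where "IP = (LINT x:{0..}|lborel. (norm (\<Phi> k x))^2)"
    define ID where "ID = (LINT x:{0..}|lborel. (norm (d\<Phi> k x))^2)"
    define IW where "IW = (LINT x:{0..}|lborel. (norm (dd\<Phi> k x))^2)"
    have IP0: "0 \<le> IP" unfolding IP_def set_lebesgue_integral_def
      by (rule integral_nonneg_AE) (auto simp: indicator_def)
    have ID0: "0 \<le> ID" unfolding ID_def set_lebesgue_integral_def
      by (rule integral_nonneg_AE) (auto simp: indicator_def)
    have IPE: "IP \<le> E" unfolding IP_def E_def
    proof (rule set_integral_mono[OF iP Fint])
      fix x :: real assume x: "x \<in> {0..}"
      have "norm (\<Phi> k x) \<le> M * exp (- \<rho> * x)" using Pb ko x by auto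
      then show "(norm (\<Phi> k x))^2 \<le> F x" unfolding F_def by (intro power_mono) auto
    qed
    have IWb: "IW \<le> (K^2 * Kc)^2 * IP"
    proof -
      have "AE x in lborel. x \<in> {0..} \<longrightarrow> (norm (dd\<Phi> k x))^2 \<le> (K^2 * Kc)^2 * (norm (\<Phi> k x))^2"
        using Phi_eq[rule_format, OF ko] gB AE_lborel_singleton[of 0]
      proof eventually_elim
        case (elim x)
        show ?case
        proof
          assume "x \<in> {0..}"
          then have xp: "x > 0" using elim(3) by auto
          have "dd\<Phi> k x = - (complex_of_real ((real k)^2 * \<omega>^2 * g x) * \<Phi> k x)"
            using elim(1) xp neg_lem by blast
          then have "norm (dd\<Phi> k x) = (real k)^2 * \<omega>^2 * \<bar>g x\<bar> * norm (\<Phi> k x)"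
            by (simp only: norm_minus_cancel norm_mult norm_of_real) (simp add: abs_mult)
          also have "\<dots> \<le> (real k)^2 * \<omega>^2 * B * norm (\<Phi> k x)"
            using elim(2) by (intro mult_right_mono mult_left_mono) auto
          also have "\<dots> = K^2 * Kc * norm (\<Phi> k x)" by (simp add: K_def Kc_def mult_ac)
          finally have "norm (dd\<Phi> k x) \<le> K^2 * Kc * norm (\<Phi> k x)" .
          then have "(norm (dd\<Phi> k x))^2 \<le> (K^2 * Kc * norm (\<Phi> k x))^2" by (intro power_mono) auto
          then show "(norm (dd\<Phi> k x))^2 \<le> (K^2 * Kc)^2 * (norm (\<Phi> k x))^2"
            by (simp add: power_mult_distrib)
        qed
      qed
      then have "IW \<le> (LINT x:{0..}|lborel. (K^2 * Kc)^2 * (norm (\<Phi> k x))^2)"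
        unfolding IW_def by (intro set_integral_mono_AE[OF iW]) (use iP in auto)
      then show ?thesis unfolding IP_def by simp
    qed
    have Pb': "\<forall>x\<ge>0. norm (\<Phi> k x) \<le> M"
    proof (intro allI impI)
      fix x :: real assume x: "0 \<le> x"
      have "norm (\<Phi> k x) \<le> M * exp (- \<rho> * x)" using Pb ko x by auto
      also have "\<dots> \<le> M * 1" using Mp rho x by (intro mult_left_mono) auto
      finally show "norm (\<Phi> k x) \<le> M" by simp
    qed
    have K2p: "K^2 > 0" using Kp by simp
    note est = estimates[OF H K2p Kp Pb' Phi_0[rule_format, OF ko], folded IP_def ID_def IW_def]
    have IDf: "ID \<le> K^2 * Ybd" unfolding Ybd_def
      by (rule arith_final(1)[OF K1 IP0 IPE Kc0 IWb ID0 est(1) norm_ge_zero]) (use est(2) in simp)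
    have Dx: "norm (d\<Phi> k x) \<le> C * real k powr (3/2)" if x: "0 \<le> x" for x
    proof -
      have "(norm (d\<Phi> k x))^2 \<le> K^3 * Q" unfolding Q_def
        by (rule arith_final2[OF K1 IP0 IPE Kc0 IWb IDf[unfolded Ybd_def]]) (use est(2) x in simp)
      also have "\<dots> \<le> K^3 * C^2"
      proof (rule mult_left_mono)
        have "0 \<le> E" using IP0 IPE by simp
        then have Q0: "0 \<le> Q" unfolding Q_def by simp
        have "sqrt Q \<le> C" by (rule CE(3))
        then have "(sqrt Q)^2 \<le> C^2" using Q0 by (intro power_mono) auto
        then show "Q \<le> C^2" using Q0 by simp
      qed (use Kp in simp)
      also have "\<dots> = (C * K powr (3/2))^2" using kp[OF Kp] by (simp add: power_mult_distrib)
      finally have sq: "(norm (d\<Phi> k x))^2 \<le> (C * K powr (3/2))^2" .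
      show ?thesis using C0 using power2_le_imp_le[OF sq] by (simp add: K_def)
    qed
    have "l2norm {0..} (\<Phi> k) \<le> C"
    proof -
      have "l2norm {0..} (\<Phi> k) = sqrt IP" by (simp add: l2norm_def IP_def)
      also have "\<dots> \<le> sqrt E" using IPE by simp
      also have "\<dots> \<le> C" by (rule CE(1))
      finally show ?thesis .
    qed
    moreover have "l2norm {0..} (d\<Phi> k) \<le> C * real k"
    proof -
      have "l2norm {0..} (d\<Phi> k) = sqrt ID" by (simp add: l2norm_def ID_def)
      also have "\<dots> \<le> sqrt (K^2 * Ybd)" using IDf by simp
      also have "\<dots> = K * sqrt Ybd" using Kp by (simp add: real_sqrt_mult)
      also have "\<dots> \<le> K * C" by (rule mult_left_mono[OF CE(2)]) (use Kp in auto)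
      finally show ?thesis by (simp add: K_def mult.commute)
    qed
    ultimately show "l2norm {0..} (\<Phi> k) \<le> C \<and>
           l2norm {0..} (d\<Phi> k) \<le> C * real k \<and>
           (\<forall>x\<ge>0. norm (d\<Phi> k x) \<le> C * real k powr (3/2)) \<and>
           norm (d\<Phi> k 0) \<le> C * real k powr (3/2)"
      using Dx by auto
  qed
qed

end
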